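(* Let $0<q<1$, $b<q^{-1}$, $\mathrm{v}\in\mathbb{Z}_{\geq 0}$ and $0<a<q^{\mathrm{v}}$. Define, for $x\in\mathbb{Z}_{\geq0}$, $$\check{\xi}_{\mathrm{v}}(x;a,b)=\frac{(aq^{-\mathrm{v}};q)_{\mathrm{v}}}{(bq;q)_{\mathrm{v}}}\sum_{k=0}^{\mathrm{v}}\frac{(q^{-\mathrm{v}};q)_k\,(a^{-1}bq^{\mathrm{v}+1};q)_k}{(a^{-1}q;q)_k\,(q;q)_k}\,q^{(x+1)k}.$$ Then $\check{\xi}_{\mathrm{v}}(x;a,b)>0$ for all $x\in\mathbb{Z}_{\geq 0}$.
   Context: $(z;q)_k=\prod_{i=0}^{k-1}(1-zq^i)$, $(z;q)_0=1$. The function $\check{\xi}_{\mathrm{v}}(x;a,b)$ equals the little $q$-Jacobi polynomial in universal normalisation, $\check{P}_{\mathrm{v}}(x;a,b)=\frac{(a^{-1}q^{-\mathrm{v}};q)_{\mathrm{v}}}{(bq;q)_{\mathrm{v}}}\,{}_2\phi_1(q^{-\mathrm{v}},abq^{\mathrm{v}+1};aq;q;q^{x+1})$, with $a$ replaced by $a^{-1}$ (the "virtual state polynomial"). The case $b=0$ is included (little $q$-Laguerre case). *)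

theory Defs
  imports Complex_Main
begin

definition qpoch :: "real \<Rightarrow> real \<Rightarrow> nat \<Rightarrow> real" where
  "qpoch z q k = (\<Prod>i<k. 1 - z * q ^ i)"

definition xi_check :: "real \<Rightarrow> nat \<Rightarrow> nat \<Rightarrow> real \<Rightarrow> real \<Rightarrow> real" where
  "xi_check q v x a b =
     qpoch (a / q ^ v) q v / qpoch (b * q) q v *
     (\<Sum>k\<le>v. qpoch (1 / q ^ v) q k * qpoch (b * q ^ (v + 1) / a) q k
              / (qpoch (q / a) q k * qpoch q q k) * q ^ ((x + 1) * k))"

end

theory Submission
  imports Defs
begin

lemma qpoch_0[simp]: "qpoch z q 0 = 1" by (simp add: qpoch_def)
lemma qpoch_Suc: "qpoch z q (Suc k) = qpoch z q k * (1 - z * q ^ k)"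
  by (simp add: qpoch_def)
lemma qpoch_Suc': "qpoch z q (Suc k) = (1 - z) * qpoch (z * q) q k"
  unfolding qpoch_def by (subst prod.lessThan_Suc_shift) (simp add: mult.assoc)
lemma qpoch_add: "qpoch z q (m + n) = qpoch z q m * qpoch (z * q ^ m) q n"
  by (induction n) (simp_all add: qpoch_Suc power_add mult.assoc)

definition L :: "real \<Rightarrow> nat \<Rightarrow> real \<Rightarrow> real \<Rightarrow> real" where
  "L q n B C = (\<Sum>k\<le>n. qpoch (1 / q ^ n) q k * qpoch B q k * qpoch (C * q ^ k) q (n - k)
      / qpoch q q k * q ^ k)"

lemma qpoch_qq_pos: "0 < q \<Longrightarrow> q < 1 \<Longrightarrow> qpoch q q k > 0"
  unfolding qpoch_def
proof (rule prod_pos)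
  fix i assume "0 < q" "q < 1"
  then have "q ^ i \<le> 1" by (intro power_le_one) auto
  then have "q * q ^ i \<le> q * 1" using \<open>0 < q\<close> by (intro mult_left_mono) auto
  then have "q * q ^ i < 1" using \<open>q < 1\<close> by linarith
  then show "0 < 1 - q * q ^ i" by simp
qed

lemma Lrec:
  assumes q: "0 < q" "q < 1"
  shows "L q (Suc n) B C = (1 - C*q^n) * L q n B C - (1-B)/q^n * L q n (B*q) (C*q)"
proof -
  define x where "x = 1 / q ^ n"
  have x1: "1 / q ^ Suc n = x / q" using q by (simp add: x_def)
  define A where "A k = qpoch x q k * qpoch B q k * qpoch (C*q^k) q (Suc n - k) / qpoch q q k * q^k" for k
  define D where "D k = (if k = 0 then 0 else - (x/q) * qpoch x q (k-1) / qpoch q q (k-1)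
        * qpoch B q k * qpoch (C*q^k) q (Suc n - k) * q^k)" for k
  have fAD: "qpoch (x/q) q k * qpoch B q k * qpoch (C*q^k) q (Suc n - k) / qpoch q q k * q^k
      = A k + D k" for k
  proof (cases k)
    case 0 then show ?thesis by (simp add: A_def D_def)
  next
    case (Suc j)
    have nz: "qpoch q q j \<noteq> 0" "1 - q * q ^ j \<noteq> 0"
      using qpoch_qq_pos[OF q, of j] qpoch_qq_pos[OF q, of "Suc j"] by (auto simp: qpoch_Suc)
    have e1: "qpoch (x/q) q (Suc j) = (1 - x/q) * qpoch x q j"
      using q by (simp add: qpoch_Suc')
    show ?thesis unfolding Suc A_def D_def e1
      using nz q by (simp add: qpoch_Suc field_simps)
  qed
  have "L q (Suc n) B C = (\<Sum>k\<le>Suc n. A k + D k)"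
    unfolding L_def x1 using fAD by simp
  also have "\<dots> = (\<Sum>k\<le>Suc n. A k) + (\<Sum>k\<le>Suc n. D k)" by (rule sum.distrib)
  also have "(\<Sum>k\<le>Suc n. A k) = (1 - C*q^n) * L q n B C"
  proof -
    have "A (Suc n) = 0" unfolding A_def using q by (simp add: qpoch_Suc x_def)
    moreover have "A k = (1 - C*q^n) * (qpoch (1 / q ^ n) q k * qpoch B q k * qpoch (C * q ^ k) q (n - k)
      / qpoch q q k * q ^ k)" if "k \<le> n" for k
    proof -
      have "Suc n - k = Suc (n - k)" using that by simp
      moreover have "C * q^k * q^(n-k) = C * q^n" using that
        by (simp add: mult.assoc power_add[symmetric])
      ultimately show ?thesis unfolding A_def x_def by (simp add: qpoch_Suc)
    qed
    ultimately show ?thesis unfolding L_def by (simp add: sum_distrib_left)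
  qed
  also have "(\<Sum>k\<le>Suc n. D k) = - (1-B)/q^n * L q n (B*q) (C*q)"
  proof -
    have "D (Suc j) = - (1-B)/q^n * (qpoch (1 / q ^ n) q j * qpoch (B*q) q j * qpoch (C*q * q ^ j) q (n - j)
      / qpoch q q j * q ^ j)" for j
      unfolding D_def x_def using q qpoch_qq_pos[OF q, of j] by (simp add: qpoch_Suc' field_simps mult.assoc)
    then show ?thesis unfolding L_def sum.atMost_Suc_shift by (simp add: D_def sum_distrib_left)
  qed
  finally show ?thesis using q by (simp add: field_simps)
qed

lemma Lclosed: "0 < q \<Longrightarrow> q < 1 \<Longrightarrow> L q n B C = (\<Prod>i<n. B - C * q ^ i)"
proof (induction n arbitrary: B C)
  case 0 then show ?case by (simp add: L_def)
next
  case (Suc n)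
  have e: "(\<Prod>i<n. B*q - C*(q * q ^ i)) = q^n * (\<Prod>i<n. B - C * q ^ i)"
  proof -
    have "(\<Prod>i<n. B*q - C*(q * q ^ i)) = (\<Prod>i<n. q * (B - C * q ^ i))"
      by (rule prod.cong) (auto simp: algebra_simps)
    also have "\<dots> = q^n * (\<Prod>i<n. B - C * q ^ i)" by (simp add: prod.distrib)
    finally show ?thesis .
  qed
  show ?case using Suc by (simp add: Lrec e field_simps)
qed


definition S :: "real \<Rightarrow> nat \<Rightarrow> real \<Rightarrow> real \<Rightarrow> real \<Rightarrow> real" where
  "S q v a b z = (\<Sum>k\<le>v. qpoch (1 / q ^ v) q k * qpoch (b * q ^ (v + 1) / a) q k
              / (qpoch (q / a) q k * qpoch q q k) * z ^ k)"

lemma Cfac_neg: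
  fixes q a :: real
  assumes "0 < q" "q < 1" "0 < a" "a < q ^ v" "i < v"
  shows "1 - q / a * q ^ i < 0"
proof -
  have "q ^ v \<le> q ^ Suc i" using power_decreasing[of "Suc i" v q] assms by auto
  then have "a < q ^ Suc i" using assms by linarith
  then have "1 < q ^ Suc i / a" using assms by simp
  then show ?thesis by (simp add: mult.commute)
qed

lemma Cpoch_nz:
  assumes "0 < q" "q < 1" "0 < a" "a < q ^ v" "k \<le> v"
  shows "qpoch (q / a) q k \<noteq> 0"
proof -
  have "1 - q/a*q^i < 0" if "i < k" for i
    using that assms(5) by (intro Cfac_neg[OF assms(1-4)]) simp
  then have "1 - q/a*q^i \<noteq> 0" if "i < k" for i using that by fastforce
  then show ?thesis unfolding qpoch_def by auto
qed

lemma auxlem: "(c::real) \<noteq> 0 \<Longrightarrow> d \<noteq> 0 \<Longrightarrow> x*y/(c*Q)*z = x*y*d/Q*z/(c*d)"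
  by (simp add: field_simps)

lemma S_q_pos:
  assumes q: "0 < q" "q < 1" and b: "b < 1 / q" and a: "0 < a" "a < q ^ v"
  shows "S q v a b q > 0"
proof -
  define B where "B = b * q ^ (v + 1) / a"
  define C where "C = q / a"
  have Cnz: "qpoch C q k \<noteq> 0" if "k \<le> v" for k
    unfolding C_def using Cpoch_nz[OF q a that] .
  have "S q v a b q = L q v B C / qpoch C q v"
    unfolding S_def L_def sum_divide_distrib
  proof (rule sum.cong)
    fix k assume "k \<in> {..v}"
    then have k: "k \<le> v" by simp
    have sp: "qpoch C q v = qpoch C q k * qpoch (C * q ^ k) q (v - k)"
      using qpoch_add[of C q k "v - k"] k by simp
    have "qpoch C q k \<noteq> 0" "qpoch (C * q ^ k) q (v - k) \<noteq> 0"
      using Cnz[OF order.refl] sp Cnz[OF k] by auto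
    note aux = auxlem[OF this]
    show "qpoch (1 / q ^ v) q k * qpoch (b * q ^ (v + 1) / a) q k / (qpoch (q / a) q k * qpoch q q k) * q ^ k =
         qpoch (1 / q ^ v) q k * qpoch B q k * qpoch (C * q ^ k) q (v - k) / qpoch q q k * q ^ k / qpoch C q v"
      unfolding sp unfolding B_def C_def by (rule aux[unfolded C_def])
  qed simp
  also have "\<dots> = (\<Prod>i<v. (B - C * q ^ i) / (1 - C * q ^ i))"
    using Lclosed[OF q] by (simp add: qpoch_def prod_dividef)
  also have "\<dots> > 0"
  proof (rule prod_pos)
    fix i assume "i \<in> {..<v}"
    then have i: "i < v" by simp
    have d: "1 - C * q ^ i < 0" unfolding C_def using Cfac_neg[OF q a i] .
    have "b * q ^ (v + 1) < q ^ Suc i"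
    proof (cases "b \<le> 0")
      case True
      then have "b * q ^ (v + 1) \<le> 0" using q by (simp add: mult_nonpos_nonneg)
      then show ?thesis using q by (smt (verit) zero_less_power)
    next
      case False
      have "b * q < 1" using b q by (simp add: pos_less_divide_eq)
      then have "b * q * q ^ v < q ^ v" using q by simp
      moreover have "q ^ v \<le> q ^ Suc i" using power_decreasing[of "Suc i" v q] q i by auto
      ultimately show ?thesis by (simp add: mult.assoc mult.commute)
    qed
    then have "B - C * q ^ i < 0" unfolding B_def C_def using a
      by (simp add: field_simps)
    then show "0 < (B - C * q ^ i) / (1 - C * q ^ i)" using d by (simp add: divide_neg_neg)
  qed
  finally show ?thesis .
qed


lemma aux2:
  fixes w Y Q q x y X1 X2 z :: real
  assumes "1 - w \<noteq> 0" "Y \<noteq> 0" "Q \<noteq> 0" "1 - q * q ^ j \<noteq> 0"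
  shows "(1-x)*X1*((1-y)*X2)/((1-w)*Y*(Q*(1-q*q^j)))*(z^Suc j - (q*z)^Suc j)
     = z*((1-x)*(1-y)/(1-w))*(X1*X2/(Y*Q)*z^j)"
proof -
  have "z^Suc j - (q*z)^Suc j = z*z^j*(1 - q*q^j)" by (simp add: power_mult_distrib algebra_simps)
  moreover have "\<And>A B W r zj. W \<noteq> 0 \<Longrightarrow> r \<noteq> 0 \<Longrightarrow>
      A*X1*(B*X2)/(W*Y*(Q*r))*(z*zj*r) = z*(A*B/W)*(X1*X2/(Y*Q)*zj)"
    using assms(2,3) by (simp add: field_simps)
  ultimately show ?thesis using assms(1,4) by simp
qed

lemma S_diff:
  fixes q a b z :: real
  assumes q: "0 < q" "q < 1" and a: "0 < a" "a < q ^ Suc n"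
  shows "S q (Suc n) a b z - S q (Suc n) a b (q*z)
     = z * ((1 - 1/q^Suc n)*(1 - b*q^(Suc n+1)/a)/(1 - q/a)) * S q n (a/q) (b*q) z"
proof -
  define t where "t k = qpoch (1 / q ^ Suc n) q k * qpoch (b * q ^ (Suc n + 1) / a) q k
              / (qpoch (q / a) q k * qpoch q q k)" for k
  define K where "K = (1 - 1/q^Suc n)*(1 - b*q^(Suc n+1)/a)/(1 - q/a)"
  have a': "0 < a/q" "a/q < q^n" using q a by (auto simp: field_simps)
  have "S q (Suc n) a b z - S q (Suc n) a b (q*z) = (\<Sum>k\<le>Suc n. t k * (z^k - (q*z)^k))"
    unfolding S_def t_def by (simp add: sum_subtractf[symmetric] right_diff_distrib)
  also have "\<dots> = (\<Sum>j\<le>n. t (Suc j) * (z^Suc j - (q*z)^Suc j))"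
    by (subst sum.atMost_Suc_shift) simp
  also have "\<dots> = (\<Sum>j\<le>n. z * K * (qpoch (1 / q ^ n) q j * qpoch (b*q * q ^ (n + 1) / (a/q)) q j
              / (qpoch (q / (a/q)) q j * qpoch q q j) * z ^ j))"
  proof (rule sum.cong)
    fix j assume "j \<in> {..n}"
    then have j: "j \<le> n" by simp
    have p1: "(1/q^Suc n)*q = 1/q^n" using q by simp
    have p2: "(b*q^(Suc n+1)/a)*q = b*q*q^(n+1)/(a/q)" using q a by (simp add: field_simps)
    have p3: "(q/a)*q = q/(a/q)" using q a by (simp add: field_simps)
    have e1: "qpoch (1/q^Suc n) q (Suc j) = (1 - 1/q^Suc n) * qpoch (1/q^n) q j"
      by (simp only: qpoch_Suc' p1)
    have e2: "qpoch (b*q^(Suc n+1)/a) q (Suc j) = (1 - b*q^(Suc n+1)/a) * qpoch (b*q*q^(n+1)/(a/q)) q j"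
      by (simp only: qpoch_Suc' p2)
    have e3: "qpoch (q/a) q (Suc j) = (1 - q/a) * qpoch (q/(a/q)) q j"
      by (simp only: qpoch_Suc' p3)
    have e4: "qpoch q q (Suc j) = qpoch q q j * (1 - q * q^j)" by (rule qpoch_Suc)
    have n1: "1 - q/a \<noteq> 0" using Cfac_neg[OF q a, of 0] by (auto simp: field_simps)
    have n2: "qpoch (q/(a/q)) q j \<noteq> 0" using Cpoch_nz[OF q a' j] .
    have n3: "qpoch q q j \<noteq> 0" using qpoch_qq_pos[OF q, of j] by simp
    have n4: "1 - q * q^j \<noteq> 0" using qpoch_qq_pos[OF q, of "Suc j"] qpoch_qq_pos[OF q, of j]
      by (auto simp: qpoch_Suc)
    show "t (Suc j) * (z^Suc j - (q*z)^Suc j) = z * K * (qpoch (1 / q ^ n) q j * qpoch (b*q * q ^ (n + 1) / (a/q)) q j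
              / (qpoch (q / (a/q)) q j * qpoch q q j) * z ^ j)"
      unfolding t_def K_def e1 e2 e3 e4 by (rule aux2[OF n1 n2 n3 n4])
  qed simp
  also have "\<dots> = z * K * S q n (a/q) (b*q) z"
    unfolding S_def by (simp add: sum_distrib_left)
  finally show ?thesis unfolding K_def .
qed


lemma term_nonneg:
  fixes q a b z :: real
  assumes q: "0 < q" "q < 1" and a: "0 < a" "a < q ^ v" and k: "k \<le> v"
    and B: "b*q^(v+1)/a \<le> 1" and z: "z \<ge> 0"
  shows "qpoch (1/q^v) q k * qpoch (b*q^(v+1)/a) q k / (qpoch (q/a) q k * qpoch q q k) * z^k \<ge> 0"
proof -
  define X1 where "X1 = qpoch (1/q^v) q k"
  define X2 where "X2 = qpoch (b*q^(v+1)/a) q k"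
  define Y where "Y = qpoch (q/a) q k"
  define Q where "Q = qpoch q q k"
  have Ynz: "Y \<noteq> 0" unfolding Y_def using Cpoch_nz[OF q a k] .
  have Qp: "Q > 0" unfolding Q_def using qpoch_qq_pos[OF q] .
  have "X1 * Y = (\<Prod>i<k. (1 - 1/q^v * q^i) * (1 - q/a * q^i))"
    unfolding X1_def Y_def qpoch_def by (simp add: prod.distrib)
  also have "\<dots> \<ge> 0"
  proof (rule prod_nonneg)
    fix i assume "i \<in> {..<k}"
    then have i: "i < v" using k by simp
    have "q ^ v \<le> q ^ i" using power_decreasing[of i v q] q i by auto
    then have "1 \<le> q^i / q^v" using q by simp
    then have "1 - 1/q^v * q^i \<le> 0" by simp
    moreover have "1 - q/a * q^i < 0" using Cfac_neg[OF q a i] .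
    ultimately show "0 \<le> (1 - 1/q^v * q^i) * (1 - q/a * q^i)"
      by (simp add: mult_nonpos_nonpos)
  qed
  finally have h1: "X1 * Y \<ge> 0" .
  have h2: "X2 \<ge> 0" unfolding X2_def qpoch_def
  proof (rule prod_nonneg)
    fix i assume "i \<in> {..<k}"
    have "b*q^(v+1)/a * q^i \<le> 1"
    proof (cases "b*q^(v+1)/a \<le> 0")
      case True then show ?thesis using q by (smt (verit) mult_nonpos_nonneg zero_le_power)
    next
      case False
      have "q^i \<le> 1" using q by (simp add: power_le_one)
      then have "b*q^(v+1)/a * q^i \<le> b*q^(v+1)/a * 1" using False
        by (intro mult_left_mono) auto
      then show ?thesis using B by simp
    qed
    then show "0 \<le> 1 - b*q^(v+1)/a * q^i" by simp
  qed
  have "X1 * X2 / (Y * Q) * z^k = (X1 * Y) * X2 / (Y * Y * Q) * z^k"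
    using Ynz Qp by (simp add: field_simps)
  also have "\<dots> \<ge> 0"
  proof -
    have "0 \<le> X1 * Y * X2" using h1 h2 by simp
    moreover have "0 < Y * Y" using Ynz by (simp add: zero_less_mult_iff) linarith
    then have "0 < Y * Y * Q" using Qp by simp
    ultimately have "0 \<le> X1 * Y * X2 / (Y * Y * Q)" by (rule divide_nonneg_pos)
    then show ?thesis using z by (intro mult_nonneg_nonneg) auto
  qed
  finally show ?thesis unfolding X1_def X2_def Y_def Q_def .
qed

lemma S_pos:
  fixes q :: real
  assumes q: "0 < q" "q < 1"
  shows "\<forall>a b x. b < 1/q \<and> 0 < a \<and> a < q^v \<longrightarrow> S q v a b (q^(x+1)) > 0"
proof (induction v)
  case 0 then show ?case by (simp add: S_def)
next
  case (Suc n)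
  show ?case
  proof (intro allI impI, elim conjE)
    fix a b :: real and x :: nat
    assume b: "b < 1/q" and a: "0 < a" "a < q ^ Suc n"
    show "S q (Suc n) a b (q^(x+1)) > 0"
    proof (cases "b*q^(Suc n+1)/a \<le> 1")
      case True
      have nn: "\<forall>k\<in>{..Suc n}. 0 \<le> qpoch (1/q^Suc n) q k * qpoch (b*q^(Suc n+1)/a) q k
           / (qpoch (q/a) q k * qpoch q q k) * (q^(x+1))^k"
        using term_nonneg[OF q a _ True] q by simp
      have "qpoch (1/q^Suc n) q 0 * qpoch (b*q^(Suc n+1)/a) q 0
           / (qpoch (q/a) q 0 * qpoch q q 0) * (q^(x+1))^0 \<le> S q (Suc n) a b (q^(x+1))"
        unfolding S_def by (rule member_le_sum) (use nn in auto)
      then show ?thesis by simp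
    next
      case False
      define K where "K = (1 - 1/q^Suc n)*(1 - b*q^(Suc n+1)/a)/(1 - q/a)"
      have k1: "1 - 1/q^Suc n < 0"
      proof -
        have "q^Suc n < 1" using power_strict_decreasing[of 0 "Suc n" q] q by simp
        then have "1 < 1/q^Suc n" using q by simp
        then show ?thesis by simp
      qed
      have k3: "1 - q/a < 0" using Cfac_neg[OF q a, of 0] by simp
      have Kneg: "K < 0" unfolding K_def using k1 k3 False
        by (simp add: divide_pos_neg mult_neg_neg)
      have a': "0 < a/q" "a/q < q^n" using q a by (auto simp: field_simps)
      have b': "b*q < 1/q"
      proof -
        have "b*q < 1" using b q by (simp add: pos_less_divide_eq)
        also have "1 \<le> 1/q" using q by simp
        finally show ?thesis .
      qed
      have IH: "S q n (a/q) (b*q) (q^(y+1)) > 0" for y using Suc.IH b' a' by blast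
      have step: "S q (Suc n) a b (q^(y+1)) < S q (Suc n) a b (q^(Suc y+1))" for y
      proof -
        have "S q (Suc n) a b (q^(y+1)) - S q (Suc n) a b (q*q^(y+1)) = q^(y+1) * K * S q n (a/q) (b*q) (q^(y+1))"
          unfolding K_def by (rule S_diff[OF q a])
        moreover have "q^(y+1) * K * S q n (a/q) (b*q) (q^(y+1)) < 0"
          using IH[of y] Kneg q by (simp add: mult_pos_neg mult_neg_pos)
        ultimately show ?thesis by simp
      qed
      have "S q (Suc n) a b q \<le> S q (Suc n) a b (q^(y+1))" for y
      proof (induction y)
        case 0 then show ?case by simp
      next
        case (Suc y) then show ?case using step[of y] by linarith
      qed
      moreover have "S q (Suc n) a b q > 0" using S_q_pos[OF q b a] .
      ultimately show ?thesis by (meson less_le_trans)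
    qed
  qed
qed


theorem mainTheorem2:
  fixes q a b :: real and v x :: nat
  assumes "0 < q" and "q < 1" and "b < 1 / q" and "0 < a" and "a < q ^ v"
  shows "xi_check q v x a b > 0"
proof -
  note q = assms(1,2)
  have eq: "xi_check q v x a b = qpoch (a / q ^ v) q v / qpoch (b * q) q v * S q v a b (q^(x+1))"
    unfolding xi_check_def S_def power_mult ..
  have p1: "qpoch (a / q ^ v) q v > 0" unfolding qpoch_def
  proof (rule prod_pos)
    fix i assume "i \<in> {..<v}"
    have "q^i \<le> 1" using q by (simp add: power_le_one)
    then have "a * q^i \<le> a" using assms(4) by (simp add: mult_left_le)
    then have "a * q^i < q^v" using assms(5) by linarith
    then show "0 < 1 - a / q ^ v * q ^ i" using q by (simp add: field_simps)
  qed
  have p2: "qpoch (b * q) q v > 0" unfolding qpoch_def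
  proof (rule prod_pos)
    fix i assume "i \<in> {..<v}"
    have bq: "b * q < 1" using assms(3) q by (simp add: pos_less_divide_eq)
    have "b * q * q^i < 1"
    proof (cases "b \<le> 0")
      case True then show ?thesis using q by (smt (verit) mult_nonpos_nonneg zero_le_power mult_pos_pos)
    next
      case False
      have "q^i \<le> 1" using q by (simp add: power_le_one)
      then have "b * q * q^i \<le> b * q" using False q by (simp add: mult_left_le)
      then show ?thesis using bq by linarith
    qed
    then show "0 < 1 - b * q * q ^ i" by simp
  qed
  have "S q v a b (q^(x+1)) > 0" using S_pos[OF q] assms by blast
  then show ?thesis unfolding eq using p1 p2 by simp
qed

end
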